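(* The space $C^\infty(\mathbb R,\mathcal S(\mathbb R))$ of smooth curves in $\mathcal S(\mathbb R)$ consists (via $c\leftrightarrow f$, $f(t,x)=c(t)(x)$) exactly of all functions $f\in C^\infty(\mathbb R^2,\mathbb R)$ with the following property: for all $k,n,m\in\mathbb N_{\ge0}$ the expression $(1+|x|^2)^k\partial_t^n\partial_x^mf(t,x)$ is bounded uniformly in $x\in\mathbb R$, locally uniformly in $t\in\mathbb R$.
   Context: $\mathcal S(\mathbb R)$ is the nuclear Fréchet space of rapidly decreasing smooth functions $f$, i.e. those for which $x\mapsto(1+|x|^2)^k\partial_x^nf(x)$ is bounded for all $k,n$, with the locally convex topology given by these seminorms. Smoothness of curves is in the usual (convenient) sense. *)

theory Defs
  imports "HOL-Analysis.Analysis"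
begin

definition schwartz :: "(real \<Rightarrow> real) set" where
  "schwartz = {f. (\<forall>n x. ((deriv ^^ n) f) differentiable (at x)) \<and>
      (\<forall>k n::nat. bounded (range (\<lambda>x. (1 + \<bar>x\<bar>^2)^k * (deriv ^^ n) f x)))}"

definition seminormS :: "nat \<Rightarrow> nat \<Rightarrow> (real \<Rightarrow> real) \<Rightarrow> real" where
  "seminormS k n g = (SUP x. (1 + \<bar>x\<bar>^2)^k * \<bar>(deriv ^^ n) g x\<bar>)"

text \<open>d is the derivative at t of the curve c in S(R): the difference quotient
  converges to d in the locally convex topology of S(R).\<close>
definition has_S_deriv :: "(real \<Rightarrow> real \<Rightarrow> real) \<Rightarrow> (real \<Rightarrow> real) \<Rightarrow> real \<Rightarrow> bool" where
  "has_S_deriv c d t \<longleftrightarrow>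
     (\<forall>k n. ((\<lambda>h. seminormS k n (\<lambda>x. (c (t + h) x - c t x) / h - d x)) \<longlongrightarrow> 0) (at 0))"

definition smooth_curve_S :: "(real \<Rightarrow> real \<Rightarrow> real) \<Rightarrow> bool" where
  "smooth_curve_S c \<longleftrightarrow> (\<exists>D :: nat \<Rightarrow> real \<Rightarrow> real \<Rightarrow> real.
      D 0 = c \<and> (\<forall>j t. D j t \<in> schwartz) \<and> (\<forall>j t. has_S_deriv (D j) (D (Suc j) t) t))"

definition dt :: "(real \<times> real \<Rightarrow> real) \<Rightarrow> real \<times> real \<Rightarrow> real" where
  "dt g = (\<lambda>(t, x). deriv (\<lambda>s. g (s, x)) t)"

definition dx :: "(real \<times> real \<Rightarrow> real) \<Rightarrow> real \<times> real \<Rightarrow> real" where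
  "dx g = (\<lambda>(t, x). deriv (\<lambda>y. g (t, y)) x)"

fun pds :: "bool list \<Rightarrow> (real \<times> real \<Rightarrow> real) \<Rightarrow> real \<times> real \<Rightarrow> real" where
  "pds [] g = g"
| "pds (b # bs) g = (if b then dt else dx) (pds bs g)"

definition smooth2 :: "(real \<times> real \<Rightarrow> real) \<Rightarrow> bool" where
  "smooth2 f \<longleftrightarrow> (\<forall>bs. continuous_on UNIV (pds bs f) \<and>
      (\<forall>t x. (\<lambda>s. pds bs f (s, x)) differentiable (at t) \<and>
             (\<lambda>y. pds bs f (t, y)) differentiable (at x)))"

end

theory Submission
  imports Defs
begin


definition smoothR :: "(real \<Rightarrow> real) \<Rightarrow> bool" where
  "smoothR g \<longleftrightarrow> (\<forall>n x. ((deriv ^^ n) g) differentiable (at x))"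

lemma schwartz_smoothR: "g \<in> schwartz \<Longrightarrow> smoothR g"
  by (simp add: schwartz_def smoothR_def)

lemma DERIV_funpow:
  assumes "smoothR g" shows "((deriv ^^ n) g has_real_derivative (deriv ^^ Suc n) g x) (at x)"
  using assms unfolding smoothR_def by (simp add: DERIV_deriv_iff_real_differentiable)

lemma deriv_lin:
  assumes "smoothR g1" "smoothR g2" "smoothR g3"
  shows "(deriv ^^ n) (\<lambda>x. (g1 x - g2 x) / h - g3 x) =
     (\<lambda>x. ((deriv ^^ n) g1 x - (deriv ^^ n) g2 x) / h - (deriv ^^ n) g3 x)"
proof (induction n)
  case 0
  then show ?case by simp
next
  case (Suc n)
  show ?case
  proof
    fix x
    have "((\<lambda>x. ((deriv ^^ n) g1 x - (deriv ^^ n) g2 x) / h - (deriv ^^ n) g3 x) has_real_derivative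
       ((deriv ^^ Suc n) g1 x - (deriv ^^ Suc n) g2 x) / h - (deriv ^^ Suc n) g3 x) (at x)"
      using DERIV_funpow[OF assms(1)] DERIV_funpow[OF assms(2)] DERIV_funpow[OF assms(3)]
      by (intro derivative_intros DERIV_cdivide) auto
    then show "(deriv ^^ Suc n) (\<lambda>x. (g1 x - g2 x) / h - g3 x) x =
      ((deriv ^^ Suc n) g1 x - (deriv ^^ Suc n) g2 x) / h - (deriv ^^ Suc n) g3 x"
      using Suc by (simp add: DERIV_imp_deriv)
  qed
qed

lemma bounded_range_iff: "bounded (range u) \<longleftrightarrow> (\<exists>B. \<forall>x. \<bar>u x\<bar> \<le> (B::real))"
  by (auto simp: bounded_iff)

lemma aux1: "\<bar>(a::real) / h - b\<bar> \<le> \<bar>a\<bar> / \<bar>h\<bar> + \<bar>b\<bar>"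
  by (metis abs_divide abs_triangle_ineq4)

lemma aux2: "\<bar>a::real\<bar> \<le> B1 \<Longrightarrow> \<bar>b\<bar> \<le> B2 \<Longrightarrow> \<bar>a - b\<bar> \<le> B1 + B2"
  by linarith

lemma schwartz_lin:
  assumes "g1 \<in> schwartz" "g2 \<in> schwartz" "g3 \<in> schwartz"
  shows "(\<lambda>x. (g1 x - g2 x) / h - g3 x) \<in> schwartz"
proof -
  note S = schwartz_smoothR[OF assms(1)] schwartz_smoothR[OF assms(2)] schwartz_smoothR[OF assms(3)]
  have d: "(deriv ^^ n) (\<lambda>x. (g1 x - g2 x) / h - g3 x) differentiable (at x)" for n x
  proof -
    have "((\<lambda>x. ((deriv ^^ n) g1 x - (deriv ^^ n) g2 x) / h - (deriv ^^ n) g3 x) has_real_derivative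
       ((deriv ^^ Suc n) g1 x - (deriv ^^ Suc n) g2 x) / h - (deriv ^^ Suc n) g3 x) (at x)"
      using DERIV_funpow[OF S(1)] DERIV_funpow[OF S(2)] DERIV_funpow[OF S(3)]
      by (intro derivative_intros DERIV_cdivide) auto
    then show ?thesis unfolding deriv_lin[OF S] using real_differentiable_def by blast
  qed
  have b: "bounded (range (\<lambda>x. (1 + \<bar>x\<bar>^2)^k * (deriv ^^ n) (\<lambda>x. (g1 x - g2 x) / h - g3 x) x))" for k n
  proof -
    obtain B1 where B1: "\<And>x. \<bar>(1 + \<bar>x\<bar>^2)^k * (deriv ^^ n) g1 x\<bar> \<le> B1"
      using assms(1) unfolding schwartz_def bounded_range_iff by blast
    obtain B2 where B2: "\<And>x. \<bar>(1 + \<bar>x\<bar>^2)^k * (deriv ^^ n) g2 x\<bar> \<le> B2"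
      using assms(2) unfolding schwartz_def bounded_range_iff by blast
    obtain B3 where B3: "\<And>x. \<bar>(1 + \<bar>x\<bar>^2)^k * (deriv ^^ n) g3 x\<bar> \<le> B3"
      using assms(3) unfolding schwartz_def bounded_range_iff by blast
    have "\<bar>(1 + \<bar>x\<bar>^2)^k * (((deriv ^^ n) g1 x - (deriv ^^ n) g2 x) / h - (deriv ^^ n) g3 x)\<bar>
        \<le> (B1 + B2) / \<bar>h\<bar> + B3" for x
    proof -
      let ?w = "(1 + \<bar>x\<bar>^2)^k"
      have eq: "?w * (((deriv ^^ n) g1 x - (deriv ^^ n) g2 x) / h - (deriv ^^ n) g3 x) =
         (?w * (deriv ^^ n) g1 x - ?w * (deriv ^^ n) g2 x) / h - ?w * (deriv ^^ n) g3 x"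
        by (simp add: right_diff_distrib)
      have 1: "\<bar>?w * (((deriv ^^ n) g1 x - (deriv ^^ n) g2 x) / h - (deriv ^^ n) g3 x)\<bar> \<le> \<bar>?w * (deriv ^^ n) g1 x - ?w * (deriv ^^ n) g2 x\<bar> / \<bar>h\<bar> + \<bar>?w * (deriv ^^ n) g3 x\<bar>"
        unfolding eq by (rule aux1)
      have 2: "\<bar>?w * (deriv ^^ n) g1 x - ?w * (deriv ^^ n) g2 x\<bar> \<le> B1 + B2"
          using B1[of x] B2[of x] by (rule aux2)
      have 3: "\<bar>?w * (deriv ^^ n) g1 x - ?w * (deriv ^^ n) g2 x\<bar> / \<bar>h\<bar> \<le> (B1 + B2) / \<bar>h\<bar>"
        using 2 by (rule divide_right_mono) simp
      show ?thesis using 1 3 B3[of x] by linarith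
    qed
    then show ?thesis unfolding deriv_lin[OF S] bounded_range_iff by blast
  qed
  show ?thesis using d b unfolding schwartz_def by blast
qed

lemma sem_ge:
  assumes "g \<in> schwartz"
  shows "(1 + \<bar>x\<bar>^2)^k * \<bar>(deriv ^^ n) g x\<bar> \<le> seminormS k n g"
proof -
  obtain B where B: "\<And>x. \<bar>(1 + \<bar>x\<bar>^2)^k * (deriv ^^ n) g x\<bar> \<le> B"
    using assms unfolding schwartz_def bounded_range_iff by blast
  have "bdd_above (range (\<lambda>x. (1 + \<bar>x\<bar>^2)^k * \<bar>(deriv ^^ n) g x\<bar>))"
    using B by (intro bdd_aboveI2[of _ _ B]) (simp add: abs_mult)
  then show ?thesis unfolding seminormS_def by (rule cSUP_upper[OF UNIV_I])
qed

lemma sem_le: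
  assumes "\<And>x. (1 + \<bar>x\<bar>^2)^k * \<bar>(deriv ^^ n) g x\<bar> \<le> M"
  shows "seminormS k n g \<le> M"
  unfolding seminormS_def by (rule cSUP_least) (use assms in auto)

lemma sem_nonneg:
  assumes "g \<in> schwartz" shows "0 \<le> seminormS k n g"
  using sem_ge[OF assms, of 0 k n] by (smt (verit) abs_ge_zero mult_nonneg_nonneg zero_le_power)



lemma pds_append: "pds (bs @ cs) g = pds bs (pds cs g)"
  by (induction bs) auto

lemma smooth2_dt: assumes "smooth2 g" shows "smooth2 (dt g)"
proof -
  have "pds bs (dt g) = pds (bs @ [True]) g" for bs by (simp add: pds_append)
  then show ?thesis using assms unfolding smooth2_def by simp
qed

lemma smooth2_dx: assumes "smooth2 g" shows "smooth2 (dx g)"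
proof -
  have "pds bs (dx g) = pds (bs @ [False]) g" for bs by (simp add: pds_append)
  then show ?thesis using assms unfolding smooth2_def by simp
qed

lemma smooth2_cont: "smooth2 g \<Longrightarrow> continuous_on UNIV g"
  unfolding smooth2_def using pds.simps(1) by metis

lemma smooth2_Dt: "smooth2 g \<Longrightarrow> ((\<lambda>s. g (s, y)) has_real_derivative dt g (t, y)) (at t)"
proof -
  assume "smooth2 g"
  then have "(\<lambda>s. g (s, y)) differentiable (at t)" unfolding smooth2_def using pds.simps(1) by metis
  then show ?thesis unfolding dt_def by (simp add: DERIV_deriv_iff_real_differentiable)
qed

lemma smooth2_Dx: "smooth2 g \<Longrightarrow> ((\<lambda>y. g (t, y)) has_real_derivative dx g (t, y)) (at y)"
proof -
  assume "smooth2 g"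
  then have "(\<lambda>y. g (t, y)) differentiable (at y)" unfolding smooth2_def using pds.simps(1) by metis
  then show ?thesis unfolding dx_def by (simp add: DERIV_deriv_iff_real_differentiable)
qed

lemma MVT_abs:
  assumes "\<And>s. (f has_real_derivative f' s) (at s)"
  shows "\<exists>z. \<bar>z - t\<bar> \<le> \<bar>h\<bar> \<and> f (t + h) - f t = h * f' z"
proof (cases "h = 0")
  case True then show ?thesis by (intro exI[of _ t]) simp
next
  case False
  show ?thesis
  proof (cases "h > 0")
    case True
    from MVT2[of t "t + h" f f'] True assms obtain z where "t < z" "z < t + h" "f (t + h) - f t = (t + h - t) * f' z"
      by auto
    then show ?thesis by (intro exI[of _ z]) auto
  next
    case False2: False
    then have "t + h < t" using False by simp
    from MVT2[of "t + h" t f f'] this assms obtain z where "t + h < z" "z < t" "f t - f (t + h) = (t - (t + h)) * f' z"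
      by auto
    then show ?thesis by (intro exI[of _ z]) (auto simp: algebra_simps)
  qed
qed

lemma mixed_eq:
  assumes g: "smooth2 g" and h: "h \<noteq> 0"
  shows "\<exists>s1 y1 s2 y2. \<bar>s1 - t\<bar> \<le> \<bar>h\<bar> \<and> \<bar>y1 - x\<bar> \<le> \<bar>h\<bar> \<and> \<bar>s2 - t\<bar> \<le> \<bar>h\<bar> \<and> \<bar>y2 - x\<bar> \<le> \<bar>h\<bar> \<and>
     dx (dt g) (s1, y1) = dt (dx g) (s2, y2)"
proof -
  let ?D = "g (t + h, x + h) - g (t + h, x) - g (t, x + h) + g (t, x)"
  have "\<exists>s. \<bar>s - t\<bar> \<le> \<bar>h\<bar> \<and> (\<lambda>s. g (s, x + h) - g (s, x)) (t + h) - (\<lambda>s. g (s, x + h) - g (s, x)) t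
      = h * (dt g (s, x + h) - dt g (s, x))"
    by (rule MVT_abs) (intro derivative_intros smooth2_Dt[OF g])
  then obtain s1 where s1: "\<bar>s1 - t\<bar> \<le> \<bar>h\<bar>" "?D = h * (dt g (s1, x + h) - dt g (s1, x))"
    by (auto simp: algebra_simps)
  have "\<exists>y. \<bar>y - x\<bar> \<le> \<bar>h\<bar> \<and> (\<lambda>y. dt g (s1, y)) (x + h) - (\<lambda>y. dt g (s1, y)) x = h * dx (dt g) (s1, y)"
    by (rule MVT_abs) (rule smooth2_Dx[OF smooth2_dt[OF g]])
  then obtain y1 where y1: "\<bar>y1 - x\<bar> \<le> \<bar>h\<bar>" "dt g (s1, x + h) - dt g (s1, x) = h * dx (dt g) (s1, y1)"
    by auto
  have "\<exists>y. \<bar>y - x\<bar> \<le> \<bar>h\<bar> \<and> (\<lambda>y. g (t + h, y) - g (t, y)) (x + h) - (\<lambda>y. g (t + h, y) - g (t, y)) x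
      = h * (dx g (t + h, y) - dx g (t, y))"
    by (rule MVT_abs) (intro derivative_intros smooth2_Dx[OF g])
  then obtain y2 where y2: "\<bar>y2 - x\<bar> \<le> \<bar>h\<bar>" "?D = h * (dx g (t + h, y2) - dx g (t, y2))"
    by (auto simp: algebra_simps)
  have "\<exists>s. \<bar>s - t\<bar> \<le> \<bar>h\<bar> \<and> (\<lambda>s. dx g (s, y2)) (t + h) - (\<lambda>s. dx g (s, y2)) t = h * dt (dx g) (s, y2)"
    by (rule MVT_abs) (rule smooth2_Dt[OF smooth2_dx[OF g]])
  then obtain s2 where s2: "\<bar>s2 - t\<bar> \<le> \<bar>h\<bar>" "dx g (t + h, y2) - dx g (t, y2) = h * dt (dx g) (s2, y2)"
    by auto
  have "h * (h * dx (dt g) (s1, y1)) = h * (h * dt (dx g) (s2, y2))"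
    using s1(2) y1(2) y2(2) s2(2) by metis
  then have "dx (dt g) (s1, y1) = dt (dx g) (s2, y2)" using h by (metis mult_cancel_left)
  then show ?thesis using s1 y1 s2 y2 by blast
qed

lemma aux3: "\<bar>(a::real) - p\<bar> < e \<Longrightarrow> \<bar>a - q\<bar> < e \<Longrightarrow> e = \<bar>p - q\<bar> / 2 \<Longrightarrow> False"
  by (simp add: abs_if split: if_split_asm)

lemma clairaut_pt:
  assumes g: "smooth2 g"
  shows "dx (dt g) (t, x) = dt (dx g) (t, x)"
proof (rule ccontr)
  let ?A = "dx (dt g)" and ?B = "dt (dx g)"
  assume ne: "?A (t, x) \<noteq> ?B (t, x)"
  define e where "e = \<bar>?A (t, x) - ?B (t, x)\<bar> / 2"
  have e: "e > 0" using ne by (simp add: e_def)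
  have cA: "continuous_on UNIV ?A"
    using smooth2_cont[OF smooth2_dx[OF smooth2_dt[OF g]]] .
  have cB: "continuous_on UNIV ?B"
    using smooth2_cont[OF smooth2_dt[OF smooth2_dx[OF g]]] .
  obtain d1 where d1: "d1 > 0" "\<And>p. dist p (t, x) < d1 \<Longrightarrow> dist (?A p) (?A (t, x)) < e"
    using cA e unfolding continuous_on_iff by (metis UNIV_I)
  obtain d2 where d2: "d2 > 0" "\<And>p. dist p (t, x) < d2 \<Longrightarrow> dist (?B p) (?B (t, x)) < e"
    using cB e unfolding continuous_on_iff by (metis UNIV_I)
  define h where "h = min d1 d2 / 3"
  have h: "h > 0" "h \<noteq> 0" using d1 d2 by (auto simp: h_def)
  obtain s1 y1 s2 y2 where P: "\<bar>s1 - t\<bar> \<le> \<bar>h\<bar>" "\<bar>y1 - x\<bar> \<le> \<bar>h\<bar>" "\<bar>s2 - t\<bar> \<le> \<bar>h\<bar>" "\<bar>y2 - x\<bar> \<le> \<bar>h\<bar>"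
     "?A (s1, y1) = ?B (s2, y2)"
    using mixed_eq[OF g h(2), of t x] by blast
  have dd: "dist (a, b) (t, x) \<le> \<bar>a - t\<bar> + \<bar>b - x\<bar>" for a b :: real
  proof -
    have "dist (a, b) (t, x) = sqrt ((a - t)^2 + (b - x)^2)"
      by (simp add: dist_Pair_Pair dist_real_def)
    also have "\<dots> \<le> sqrt ((\<bar>a - t\<bar> + \<bar>b - x\<bar>)^2)"
      by (intro real_sqrt_le_mono) (simp add: power2_eq_square algebra_simps abs_mult_self)
    also have "\<dots> = \<bar>a - t\<bar> + \<bar>b - x\<bar>" by simp
    finally show ?thesis .
  qed
  have "dist (s1, y1) (t, x) < d1" using dd[of s1 y1] P h d1 d2 by (simp add: h_def)
  then have 1: "\<bar>?A (s1, y1) - ?A (t, x)\<bar> < e" using d1(2) by (simp add: dist_real_def)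
  have "dist (s2, y2) (t, x) < d2" using dd[of s2 y2] P h d1 d2 by (simp add: h_def)
  then have 2: "\<bar>?B (s2, y2) - ?B (t, x)\<bar> < e" using d2(2) by (simp add: dist_real_def)
  show False using 1 2 P(5) e_def aux3 by metis
qed

lemma clairaut: "smooth2 g \<Longrightarrow> dx (dt g) = dt (dx g)"
  using clairaut_pt by fastforce

lemma dx_dtpow: "smooth2 g \<Longrightarrow> dx ((dt ^^ j) g) = (dt ^^ j) (dx g)"
proof (induction j arbitrary: g)
  case 0 then show ?case by simp
next
  case (Suc j)
  have "dx ((dt ^^ Suc j) g) = dx (dt ((dt ^^ j) g))" by simp
  also have "\<dots> = dt (dx ((dt ^^ j) g))"
  proof (rule clairaut)
    show "smooth2 ((dt ^^ j) g)" using Suc.prems by (induction j) (auto intro: smooth2_dt)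
  qed
  also have "\<dots> = (dt ^^ Suc j) (dx g)" using Suc by simp
  finally show ?case .
qed

lemma dxpow_dtpow: "smooth2 g \<Longrightarrow> (dx ^^ m) ((dt ^^ j) g) = (dt ^^ j) ((dx ^^ m) g)"
proof (induction m)
  case 0 then show ?case by simp
next
  case (Suc m)
  have sm: "smooth2 ((dx ^^ m) g)" using Suc.prems by (induction m) (auto intro: smooth2_dx)
  show ?case using Suc dx_dtpow[OF sm] by simp
qed

lemma pds_rep_dt: "pds (replicate n True @ bs) g = (dt ^^ n) (pds bs g)"
  by (induction n) auto

lemma pds_rep_dx: "pds (replicate n False) g = (dx ^^ n) g"
  by (induction n) auto



lemma derivpow_slice: "(deriv ^^ m) (\<lambda>x. g (t, x)) = (\<lambda>x. (dx ^^ m) g (t, x))"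
proof (induction m)
  case 0 then show ?case by simp
next
  case (Suc m) then show ?case by (simp add: dx_def)
qed

lemma smooth2_pows: "smooth2 f \<Longrightarrow> smooth2 ((dt ^^ j) ((dx ^^ m) f))"
proof -
  assume a: "smooth2 f"
  have "smooth2 ((dx ^^ m) f)" using a by (induction m) (auto intro: smooth2_dx)
  then show ?thesis by (induction j) (auto intro: smooth2_dt)
qed

lemma converse_dir:
  fixes f :: "real \<times> real \<Rightarrow> real"
  assumes sm: "smooth2 f"
    and bnd: "\<forall>k n m :: nat. \<forall>t0. \<exists>e>0. \<exists>B. \<forall>t x. \<bar>t - t0\<bar> < e \<longrightarrow>
        \<bar>(1 + \<bar>x\<bar>^2)^k * (dt ^^ n) ((dx ^^ m) f) (t, x)\<bar> \<le> B"
  shows "smooth_curve_S (\<lambda>t x. f (t, x))"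
proof -
  define D where "D = (\<lambda>j t x. (dt ^^ j) f (t, x))"
  have dD: "(deriv ^^ m) (D j t) = (\<lambda>x. (dt ^^ j) ((dx ^^ m) f) (t, x))" for m j t
    unfolding D_def derivpow_slice dxpow_dtpow[OF sm] ..
  have DS: "D j t \<in> schwartz" for j t
  proof -
    have "(deriv ^^ m) (D j t) differentiable (at x)" for m x
      unfolding dD using smooth2_Dx[OF smooth2_pows[OF sm]] real_differentiable_def by blast
    moreover have "bounded (range (\<lambda>x. (1 + \<bar>x\<bar>^2)^k * (deriv ^^ m) (D j t) x))" for k m
    proof -
      obtain e B where "e > 0" "\<And>s x. \<bar>s - t\<bar> < e \<Longrightarrow> \<bar>(1 + \<bar>x\<bar>^2)^k * (dt ^^ j) ((dx ^^ m) f) (s, x)\<bar> \<le> B"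
        using bnd by meson
      then have "\<bar>(1 + \<bar>x\<bar>^2)^k * (dt ^^ j) ((dx ^^ m) f) (t, x)\<bar> \<le> B" for x by simp
      then show ?thesis unfolding dD bounded_range_iff by blast
    qed
    ultimately show ?thesis unfolding schwartz_def by blast
  qed
  have HD: "has_S_deriv (D j) (D (Suc j) t) t" for j t
    unfolding has_S_deriv_def
  proof (intro allI)
    fix k n
    define g where "g = (dt ^^ j) ((dx ^^ n) f)"
    have smg: "smooth2 g" unfolding g_def by (rule smooth2_pows[OF sm])
    define q where "q h = (\<lambda>x. (D j (t + h) x - D j t x) / h - D (Suc j) t x)" for h
    have qS: "q h \<in> schwartz" for h unfolding q_def by (intro schwartz_lin DS)
    have dq: "(deriv ^^ n) (q h) = (\<lambda>x. (g (t + h, x) - g (t, x)) / h - dt g (t, x))" for h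
      unfolding q_def deriv_lin[OF schwartz_smoothR[OF DS] schwartz_smoothR[OF DS] schwartz_smoothR[OF DS]] dD g_def
      by simp
    obtain e B where e: "e > 0" and B: "\<And>s x. \<bar>s - t\<bar> < e \<Longrightarrow> \<bar>(1 + \<bar>x\<bar>^2)^k * (dt ^^ Suc (Suc j)) ((dx ^^ n) f) (s, x)\<bar> \<le> B"
      using bnd by meson
    have B': "\<bar>(1 + \<bar>x\<bar>^2)^k * dt (dt g) (s, x)\<bar> \<le> B" if "\<bar>s - t\<bar> < e" for s x
      using B[OF that, of x] unfolding g_def by simp
    have key: "seminormS k n (q h) \<le> \<bar>h\<bar> * B" if h: "\<bar>h\<bar> < e" and h0: "h \<noteq> 0" for h
    proof (rule sem_le)
      fix x
      obtain z where z: "\<bar>z - t\<bar> \<le> \<bar>h\<bar>" "g (t + h, x) - g (t, x) = h * dt g (z, x)"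
        using MVT_abs[of "\<lambda>s. g (s, x)" "\<lambda>s. dt g (s, x)" t h] smooth2_Dt[OF smg] by blast
      obtain y where y: "\<bar>y - t\<bar> \<le> \<bar>z - t\<bar>" "dt g (t + (z - t), x) - dt g (t, x) = (z - t) * dt (dt g) (y, x)"
        using MVT_abs[of "\<lambda>s. dt g (s, x)" "\<lambda>s. dt (dt g) (s, x)" t "z - t"] smooth2_Dt[OF smooth2_dt[OF smg]] by blast
      have yt: "\<bar>y - t\<bar> < e" using y(1) z(1) h by linarith
      have "(deriv ^^ n) (q h) x = (z - t) * dt (dt g) (y, x)"
      proof -
        have "(g (t + h, x) - g (t, x)) / h = dt g (z, x)" using z(2) h0 by simp
        then show ?thesis using y(2) by (simp add: dq)
      qed
      then have "(1 + \<bar>x\<bar>^2)^k * \<bar>(deriv ^^ n) (q h) x\<bar> = \<bar>z - t\<bar> * \<bar>(1 + \<bar>x\<bar>^2)^k * dt (dt g) (y, x)\<bar>"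
        by (simp add: abs_mult)
      also have "\<dots> \<le> \<bar>h\<bar> * B"
        by (rule mult_mono) (use z(1) B'[OF yt, of x] in auto)
      finally show "(1 + \<bar>x\<bar>^2)^k * \<bar>(deriv ^^ n) (q h) x\<bar> \<le> \<bar>h\<bar> * B" .
    qed
    have ev: "eventually (\<lambda>h. norm (seminormS k n (q h)) \<le> \<bar>h\<bar> * B) (at 0)"
      unfolding eventually_at
    proof (intro exI[of _ e] conjI ballI impI)
      fix h :: real assume "h \<noteq> 0 \<and> dist h 0 < e"
      then have "\<bar>h\<bar> < e" "h \<noteq> 0" by simp_all
      then show "norm (seminormS k n (q h)) \<le> \<bar>h\<bar> * B"
        using key sem_nonneg[OF qS] by simp
    qed (use e in auto)
    have lim: "((\<lambda>h. \<bar>h\<bar> * B) \<longlongrightarrow> 0) (at (0::real))"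
      by (auto intro!: tendsto_eq_intros)
    show "((\<lambda>h. seminormS k n (\<lambda>x. (D j (t + h) x - D j t x) / h - D (Suc j) t x)) \<longlongrightarrow> 0) (at 0)"
      using Lim_null_comparison[OF ev lim] unfolding q_def .
  qed
  show ?thesis unfolding smooth_curve_S_def
    by (intro exI[of _ D] conjI allI DS HD) (simp add: D_def)
qed



lemma aux4: "(h::real) \<noteq> 0 \<Longrightarrow> X = a + h * (((X - a) / h - c) + c)"
  by (simp add: field_simps)

lemma aux5: "\<bar>(a::real) + h * (b + c)\<bar> \<le> \<bar>a\<bar> + \<bar>h\<bar> * (\<bar>b\<bar> + \<bar>c\<bar>)"
proof -
  have "\<bar>a + h * (b + c)\<bar> \<le> \<bar>a\<bar> + \<bar>h * (b + c)\<bar>" by (rule abs_triangle_ineq)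
  also have "\<bar>h * (b + c)\<bar> = \<bar>h\<bar> * \<bar>b + c\<bar>" by (rule abs_mult)
  also have "\<bar>h\<bar> * \<bar>b + c\<bar> \<le> \<bar>h\<bar> * (\<bar>b\<bar> + \<bar>c\<bar>)" by (rule mult_left_mono) (simp_all add: abs_triangle_ineq)
  finally show ?thesis by simp
qed

lemma fwd_local_bound:
  assumes DS: "\<And>j t. D j t \<in> schwartz" and HD: "\<And>j t. has_S_deriv (D j) (D (Suc j) t) t"
  shows "\<exists>e>0. \<exists>B. \<forall>t x. \<bar>t - t0\<bar> < e \<longrightarrow> (1 + \<bar>x\<bar>^2)^k * \<bar>(deriv ^^ m) (D j t) x\<bar> \<le> B"
proof -
  define q where "q h = (\<lambda>x. (D j (t0 + h) x - D j t0 x) / h - D (Suc j) t0 x)" for h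
  have qS: "q h \<in> schwartz" for h unfolding q_def by (intro schwartz_lin DS)
  have dq: "(deriv ^^ m) (q h) x = ((deriv ^^ m) (D j (t0 + h)) x - (deriv ^^ m) (D j t0) x) / h - (deriv ^^ m) (D (Suc j) t0) x" for h x
    unfolding q_def deriv_lin[OF schwartz_smoothR[OF DS] schwartz_smoothR[OF DS] schwartz_smoothR[OF DS]] by simp
  have lim: "((\<lambda>h. seminormS k m (q h)) \<longlongrightarrow> 0) (at 0)"
    using HD[of j t0] unfolding has_S_deriv_def q_def by blast
  have "eventually (\<lambda>h. seminormS k m (q h) < 1) (at 0)"
    using order_tendstoD(2)[OF lim, of 1] by simp
  then obtain d where d: "d > 0" "\<And>h. h \<noteq> 0 \<Longrightarrow> dist h 0 < d \<Longrightarrow> seminormS k m (q h) < 1"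
    unfolding eventually_at by auto
  let ?Sa = "seminormS k m (D j t0)" and ?Sc = "seminormS k m (D (Suc j) t0)"
  have Sc0: "0 \<le> ?Sc" by (rule sem_nonneg[OF DS])
  have "(1 + \<bar>x\<bar>^2)^k * \<bar>(deriv ^^ m) (D j t) x\<bar> \<le> ?Sa + d * (1 + ?Sc)" if t: "\<bar>t - t0\<bar> < d" for t x
  proof (cases "t = t0")
    case True
    have "0 \<le> d * (1 + ?Sc)" using d(1) Sc0 by simp
    then show ?thesis using sem_ge[OF DS, of x k m j t0] unfolding True by linarith
  next
    case False
    define h where "h = t - t0"
    have h0: "h \<noteq> 0" using False by (simp add: h_def)
    have th: "t = t0 + h" by (simp add: h_def)
    let ?w = "(1 + \<bar>x\<bar>^2)^k"
    let ?a = "(deriv ^^ m) (D j t0) x" and ?b = "(deriv ^^ m) (q h) x" and ?c = "(deriv ^^ m) (D (Suc j) t0) x"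
    have w0: "?w \<ge> 0" by simp
    have eq: "(deriv ^^ m) (D j t) x = ?a + h * (?b + ?c)"
      using h0 unfolding dq th by (rule aux4)
    have "?w * \<bar>(deriv ^^ m) (D j t) x\<bar> \<le> ?w * \<bar>?a\<bar> + \<bar>h\<bar> * (?w * \<bar>?b\<bar> + ?w * \<bar>?c\<bar>)"
    proof -
      have "\<bar>?a + h * (?b + ?c)\<bar> \<le> \<bar>?a\<bar> + \<bar>h\<bar> * (\<bar>?b\<bar> + \<bar>?c\<bar>)"
        by (rule aux5)
      then have "?w * \<bar>?a + h * (?b + ?c)\<bar> \<le> ?w * (\<bar>?a\<bar> + \<bar>h\<bar> * (\<bar>?b\<bar> + \<bar>?c\<bar>))"
        by (rule mult_left_mono) simp
      then show ?thesis unfolding eq by (simp add: algebra_simps)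
    qed
    also have "\<dots> \<le> ?Sa + d * (1 + ?Sc)"
    proof -
      have 1: "?w * \<bar>?a\<bar> \<le> ?Sa" by (rule sem_ge[OF DS])
      have 2: "?w * \<bar>?b\<bar> \<le> 1" using sem_ge[OF qS, of x k m h] d(2)[OF h0] t by (simp add: h_def dist_real_def)
      have 3: "?w * \<bar>?c\<bar> \<le> ?Sc" by (rule sem_ge[OF DS])
      have "\<bar>h\<bar> * (?w * \<bar>?b\<bar> + ?w * \<bar>?c\<bar>) \<le> d * (1 + ?Sc)"
        by (rule mult_mono) (use t 2 3 in \<open>auto simp: h_def\<close>)
      then show ?thesis using 1 by linarith
    qed
    finally show ?thesis .
  qed
  then show ?thesis using d(1) by blast
qed

lemma fwd_deriv:
  assumes DS: "\<And>j t. D j t \<in> schwartz" and HD: "\<And>j t. has_S_deriv (D j) (D (Suc j) t) t"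
  shows "((\<lambda>s. (deriv ^^ m) (D j s) x) has_real_derivative (deriv ^^ m) (D (Suc j) t) x) (at t)"
proof -
  define q where "q h = (\<lambda>x. (D j (t + h) x - D j t x) / h - D (Suc j) t x)" for h
  have qS: "q h \<in> schwartz" for h unfolding q_def by (intro schwartz_lin DS)
  have dq: "(deriv ^^ m) (q h) x = ((deriv ^^ m) (D j (t + h)) x - (deriv ^^ m) (D j t) x) / h - (deriv ^^ m) (D (Suc j) t) x" for h
    unfolding q_def deriv_lin[OF schwartz_smoothR[OF DS] schwartz_smoothR[OF DS] schwartz_smoothR[OF DS]] by simp
  have lim: "((\<lambda>h. seminormS 0 m (q h)) \<longlongrightarrow> 0) (at 0)"
    using HD[of j t] unfolding has_S_deriv_def q_def by blast
  have "((\<lambda>h. (deriv ^^ m) (q h) x) \<longlongrightarrow> 0) (at 0)"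
  proof (rule Lim_null_comparison[OF _ lim])
    show "eventually (\<lambda>h. norm ((deriv ^^ m) (q h) x) \<le> seminormS 0 m (q h)) (at 0)"
      using sem_ge[OF qS, of x 0 m] by (intro always_eventually) simp
  qed
  then have "((\<lambda>h. ((deriv ^^ m) (D j (t + h)) x - (deriv ^^ m) (D j t) x) / h) \<longlongrightarrow> (deriv ^^ m) (D (Suc j) t) x) (at 0)"
    unfolding dq by (subst Lim_null) simp
  then show ?thesis unfolding DERIV_def by simp
qed



lemma fwd_cont:
  assumes DS: "\<And>j t. D j t \<in> schwartz" and HD: "\<And>j t. has_S_deriv (D j) (D (Suc j) t) t"
  shows "isCont (\<lambda>p. (deriv ^^ m) (D j (fst p)) (snd p)) (t0, x0)"
proof -
  let ?G = "\<lambda>s y. (deriv ^^ m) (D j s) y"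
  obtain e B where e: "e > 0" and B: "\<And>t x. \<bar>t - t0\<bar> < e \<Longrightarrow> (1 + \<bar>x\<bar>^2)^0 * \<bar>(deriv ^^ m) (D (Suc j) t) x\<bar> \<le> B"
    using fwd_local_bound[where D=D, OF DS HD, of t0 0 m "Suc j"] by blast
  have ft: "((\<lambda>p. fst p) \<longlongrightarrow> t0) (at (t0, x0))"
    using tendsto_fst[OF tendsto_ident_at[of "(t0, x0)" UNIV]] by simp
  have st: "((\<lambda>p. snd p) \<longlongrightarrow> x0) (at (t0, x0))"
    using tendsto_snd[OF tendsto_ident_at[of "(t0, x0)" UNIV]] by simp
  have lim0: "((\<lambda>p. \<bar>fst p - t0\<bar> * B) \<longlongrightarrow> 0) (at (t0, x0))"
  proof -
    have "((\<lambda>p. \<bar>fst p - t0\<bar>) \<longlongrightarrow> 0) (at (t0, x0))"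
      by (rule tendsto_rabs_zero) (rule LIM_zero[OF ft])
    from tendsto_mult[OF this tendsto_const[of B]] show ?thesis by simp
  qed
  have ev: "eventually (\<lambda>p. norm (?G (fst p) (snd p) - ?G t0 (snd p)) \<le> \<bar>fst p - t0\<bar> * B) (at (t0, x0))"
    unfolding eventually_at
  proof (intro exI[of _ e] conjI ballI impI)
    fix p :: "real \<times> real" assume "p \<noteq> (t0, x0) \<and> dist p (t0, x0) < e"
    then have "dist (fst p) t0 < e" using dist_fst_le[of p "(t0, x0)"] by simp
    then have pe: "\<bar>fst p - t0\<bar> < e" by (simp add: dist_real_def)
    obtain z where z: "\<bar>z - t0\<bar> \<le> \<bar>fst p - t0\<bar>"
      "?G (t0 + (fst p - t0)) (snd p) - ?G t0 (snd p) = (fst p - t0) * (deriv ^^ m) (D (Suc j) z) (snd p)"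
      using MVT_abs[of "\<lambda>s. ?G s (snd p)" "\<lambda>s. (deriv ^^ m) (D (Suc j) s) (snd p)" t0 "fst p - t0"]
        fwd_deriv[where D=D, OF DS HD] by blast
    have zb: "\<bar>(deriv ^^ m) (D (Suc j) z) (snd p)\<bar> \<le> B" using B[of z "snd p"] z(1) pe by simp
    have "norm (?G (fst p) (snd p) - ?G t0 (snd p)) = \<bar>fst p - t0\<bar> * \<bar>(deriv ^^ m) (D (Suc j) z) (snd p)\<bar>"
      using z(2) by (simp add: abs_mult)
    also have "\<dots> \<le> \<bar>fst p - t0\<bar> * B" by (rule mult_left_mono[OF zb]) simp
    finally show "norm (?G (fst p) (snd p) - ?G t0 (snd p)) \<le> \<bar>fst p - t0\<bar> * B" .
  qed (use e in auto)
  have l1: "((\<lambda>p. ?G (fst p) (snd p) - ?G t0 (snd p)) \<longlongrightarrow> 0) (at (t0, x0))"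
    by (rule Lim_null_comparison[OF ev lim0])
  have ic: "isCont (?G t0) x0"
    by (rule DERIV_isCont[OF DERIV_funpow[OF schwartz_smoothR[OF DS]]])
  have l2: "((\<lambda>p. ?G t0 (snd p)) \<longlongrightarrow> ?G t0 x0) (at (t0, x0))"
    by (rule isCont_tendsto_compose[OF ic st])
  have "((\<lambda>p. (?G (fst p) (snd p) - ?G t0 (snd p)) + ?G t0 (snd p)) \<longlongrightarrow> 0 + ?G t0 x0) (at (t0, x0))"
    by (rule tendsto_add[OF l1 l2])
  then show ?thesis unfolding continuous_at by simp
qed

lemma forward_dir:
  fixes f :: "real \<times> real \<Rightarrow> real"
  assumes "smooth_curve_S (\<lambda>t x. f (t, x))"
  shows "smooth2 f \<and>
     (\<forall>k n m :: nat. \<forall>t0. \<exists>e>0. \<exists>B. \<forall>t x. \<bar>t - t0\<bar> < e \<longrightarrow>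
        \<bar>(1 + \<bar>x\<bar>^2)^k * (dt ^^ n) ((dx ^^ m) f) (t, x)\<bar> \<le> B)"
proof -
  obtain D where D0: "D 0 = (\<lambda>t x. f (t, x))" and DS: "\<And>j t. D j t \<in> schwartz"
    and HD: "\<And>j t. has_S_deriv (D j) (D (Suc j) t) t"
    using assms unfolding smooth_curve_S_def by blast
  define G where "G j m = (\<lambda>p. (deriv ^^ m) (D j (fst p)) (snd p))" for j m
  have Gdt: "dt (G j m) = G (Suc j) m" for j m
  proof (rule ext)
    fix p :: "real \<times> real"
    obtain t x where p: "p = (t, x)" by (cases p)
    show "dt (G j m) p = G (Suc j) m p"
      unfolding p dt_def G_def by (simp add: DERIV_imp_deriv[OF fwd_deriv[where D=D, OF DS HD]])
  qed
  have Gdx: "dx (G j m) = G j (Suc m)" for j m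
  proof (rule ext)
    fix p :: "real \<times> real"
    obtain t x where p: "p = (t, x)" by (cases p)
    show "dx (G j m) p = G j (Suc m) p"
      unfolding p dx_def G_def by simp
  qed
  have G00: "f = G 0 0" unfolding G_def D0 by simp
  have pdsG: "\<exists>j m. pds bs f = G j m" for bs
  proof (induction bs)
    case Nil then show ?case using G00 by auto
  next
    case (Cons b bs)
    then obtain j m where "pds bs f = G j m" by blast
    then show ?case using Gdt Gdx by (cases b) auto
  qed
  have smG: "continuous_on UNIV (G j m) \<and> (\<forall>t x. (\<lambda>s. G j m (s, x)) differentiable (at t) \<and>
             (\<lambda>y. G j m (t, y)) differentiable (at x))" for j m
  proof (intro conjI allI)
    show "continuous_on UNIV (G j m)"
      unfolding G_def by (intro continuous_at_imp_continuous_on ballI) (metis fwd_cont[where D=D, OF DS HD] surj_pair)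
  next
    fix t x
    show "(\<lambda>s. G j m (s, x)) differentiable (at t)"
      unfolding G_def using fwd_deriv[where D=D, OF DS HD, of m j x t] real_differentiable_def by auto
    show "(\<lambda>y. G j m (t, y)) differentiable (at x)"
      unfolding G_def using DS unfolding schwartz_def by simp
  qed
  have sm: "smooth2 f"
    unfolding smooth2_def
  proof
    fix bs
    obtain j m where "pds bs f = G j m" using pdsG by blast
    then show "continuous_on UNIV (pds bs f) \<and> (\<forall>t x. (\<lambda>s. pds bs f (s, x)) differentiable (at t) \<and>
             (\<lambda>y. pds bs f (t, y)) differentiable (at x))" using smG by simp
  qed
  have dxm: "(dx ^^ m) f = G 0 m" for m by (induction m) (use G00 Gdx in auto)
  have dtn: "(dt ^^ n) ((dx ^^ m) f) = G n m" for n m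
    unfolding dxm by (induction n) (use Gdt in auto)
  have bnd: "\<exists>e>0. \<exists>B. \<forall>t x. \<bar>t - t0\<bar> < e \<longrightarrow>
        \<bar>(1 + \<bar>x\<bar>^2)^k * (dt ^^ n) ((dx ^^ m) f) (t, x)\<bar> \<le> B" for k n m t0
  proof -
    obtain e B where "e > 0" "\<And>t x. \<bar>t - t0\<bar> < e \<Longrightarrow> (1 + \<bar>x\<bar>^2)^k * \<bar>(deriv ^^ m) (D n t) x\<bar> \<le> B"
      using fwd_local_bound[where D=D, OF DS HD, of t0 k m n] by blast
    then show ?thesis unfolding dtn G_def by (intro exI[of _ e] conjI exI[of _ B] allI impI) (auto simp: abs_mult)
  qed
  show ?thesis using sm bnd by blast
qed

theorem lemma6p3:
  fixes f :: "real \<times> real \<Rightarrow> real"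
  shows "smooth_curve_S (\<lambda>t x. f (t, x)) \<longleftrightarrow>
    (smooth2 f \<and>
     (\<forall>k n m :: nat. \<forall>t0. \<exists>e>0. \<exists>B. \<forall>t x. \<bar>t - t0\<bar> < e \<longrightarrow>
        \<bar>(1 + \<bar>x\<bar>^2)^k * (dt ^^ n) ((dx ^^ m) f) (t, x)\<bar> \<le> B))"
  using forward_dir converse_dir by blast

end
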